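(* Let $\Theta\subseteq\mathbb{R}^p$ be convex and bounded with diameter $R\triangleq\max_{\theta_1,\theta_2\in\Theta}\|\theta_1-\theta_2\|_2$, and let $f:\mathbb{R}^p\to\mathbb{R}$ be continuous and convex with minimum $f^\star$ over $\Theta$. Consider the following scheme: given $\theta_0\in\Theta$, for $n\ge1$, let $g_n$ be a majorant function in $\mathcal{S}_{L,L}(f,\theta_{n-1})$; compute $\nu_n\in\operatorname{arg\,min}_{\theta\in\Theta}\big[g_n(\theta)-\frac{L}{2}\|\theta-\theta_{n-1}\|_2^2\big]$; compute $\alpha^\star\in\operatorname{arg\,min}_{\alpha\in[0,1]}g_n(\alpha\nu_n+(1-\alpha)\theta_{n-1})$; set $\theta_n\triangleq\alpha^\star\nu_n+(1-\alpha^\star)\theta_{n-1}$. Then $(f(\theta_n))_{n\ge0}$ converges to $f^\star$ and $$f(\theta_n)-f^\star\le\frac{2LR^2}{n+2}\quad\text{for all }n\ge1.$$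
   Context: First-order surrogates: $g:\mathbb{R}^p\to\mathbb{R}$ belongs to $\mathcal{S}_L(f,\kappa)$ if (a) $g(\theta')\ge f(\theta')$ for all $\theta'\in\operatorname{arg\,min}_{\theta\in\Theta}g(\theta)$, and (b) $h\triangleq g-f$ is differentiable with $L$-Lipschitz gradient, $h(\kappa)=0$, $\nabla h(\kappa)=0$; $\mathcal{S}_{L,\rho}(f,\kappa)$ is the subset of $\rho$-strongly convex elements. A majorant function satisfies $g\ge f$ everywhere. The minimizers are assumed to exist. *)

theory Defs
  imports "HOL-Analysis.Analysis"
begin

definition strongly_convex_on :: "real \<Rightarrow> 'a::real_inner set \<Rightarrow> ('a \<Rightarrow> real) \<Rightarrow> bool" where
  "strongly_convex_on \<rho> S g \<longleftrightarrow> convex_on S (\<lambda>x. g x - \<rho> / 2 * (norm x)\<^sup>2)"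

definition first_order_surrogate ::
  "'a::euclidean_space set \<Rightarrow> real \<Rightarrow> ('a \<Rightarrow> real) \<Rightarrow> 'a \<Rightarrow> ('a \<Rightarrow> real) \<Rightarrow> bool" where
  "first_order_surrogate \<Theta> L f \<kappa> g \<longleftrightarrow>
     (\<forall>\<theta>'. is_arg_min g (\<lambda>\<theta>. \<theta> \<in> \<Theta>) \<theta>' \<longrightarrow> f \<theta>' \<le> g \<theta>') \<and>
     (\<exists>G :: 'a \<Rightarrow> 'a.
        (\<forall>x. ((\<lambda>y. g y - f y) has_derivative (\<lambda>v. G x \<bullet> v)) (at x)) \<and>
        L-lipschitz_on UNIV G \<and>
        g \<kappa> - f \<kappa> = 0 \<and> G \<kappa> = 0)"

definition strong_first_order_surrogate ::
  "'a::euclidean_space set \<Rightarrow> real \<Rightarrow> real \<Rightarrow> ('a \<Rightarrow> real) \<Rightarrow> 'a \<Rightarrow> ('a \<Rightarrow> real) \<Rightarrow> bool" where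
  "strong_first_order_surrogate \<Theta> L \<rho> f \<kappa> g \<longleftrightarrow>
     first_order_surrogate \<Theta> L f \<kappa> g \<and> strongly_convex_on \<rho> UNIV g"

definition majorant :: "('a \<Rightarrow> real) \<Rightarrow> ('a \<Rightarrow> real) \<Rightarrow> bool" where
  "majorant f g \<longleftrightarrow> (\<forall>x. f x \<le> g x)"

end

theory Submission imports Defs "HOL-Real_Asymp.Real_Asymp" begin
lemma descent:
  fixes h :: "'a::euclidean_space \<Rightarrow> real" and G :: "'a \<Rightarrow> 'a"
  assumes hd: "\<forall>x. (h has_derivative (\<lambda>v. G x \<bullet> v)) (at x)"
    and lip: "L-lipschitz_on UNIV G" and h0: "h \<kappa> = 0" and G0: "G \<kappa> = 0"
  shows "h \<theta> \<le> L / 2 * (norm (\<theta> - \<kappa>))\<^sup>2"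
proof -
  define d where "d = \<theta> - \<kappa>"
  define \<phi> where "\<phi> t = h (\<kappa> + t *\<^sub>R d) - L / 2 * t\<^sup>2 * (norm d)\<^sup>2" for t :: real
  have der: "DERIV \<phi> t :> (G (\<kappa> + t *\<^sub>R d) \<bullet> d - L * t * (norm d)\<^sup>2)" for t
  proof -
    have l: "((\<lambda>t. \<kappa> + t *\<^sub>R d) has_derivative (\<lambda>s. s *\<^sub>R d)) (at t)"
      by (auto intro!: derivative_eq_intros)
    have "((\<lambda>t. h (\<kappa> + t *\<^sub>R d)) has_derivative (\<lambda>s. G (\<kappa> + t *\<^sub>R d) \<bullet> (s *\<^sub>R d))) (at t)"
      using has_derivative_compose[OF l hd[rule_format]] by simp
    then have a: "((\<lambda>t. h (\<kappa> + t *\<^sub>R d)) has_real_derivative (G (\<kappa> + t *\<^sub>R d) \<bullet> d)) (at t)"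
      unfolding has_field_derivative_def by (simp add: mult.commute[of _ "G (\<kappa> + t *\<^sub>R d) \<bullet> d"])
    show ?thesis unfolding \<phi>_def
      by (rule derivative_eq_intros a refl)+ (simp add: algebra_simps)
  qed
  have nonpos: "G (\<kappa> + t *\<^sub>R d) \<bullet> d - L * t * (norm d)\<^sup>2 \<le> 0" if "0 \<le> t" for t
  proof -
    have "G (\<kappa> + t *\<^sub>R d) \<bullet> d = (G (\<kappa> + t *\<^sub>R d) - G \<kappa>) \<bullet> d" using G0 by simp
    also have "\<dots> \<le> norm (G (\<kappa> + t *\<^sub>R d) - G \<kappa>) * norm d" by (rule norm_cauchy_schwarz)
    also have "\<dots> \<le> (L * norm (t *\<^sub>R d)) * norm d"
      using lipschitz_onD[OF lip, of "\<kappa> + t *\<^sub>R d" \<kappa>] by (auto simp: dist_norm intro: mult_right_mono)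
    also have "\<dots> = L * t * (norm d)\<^sup>2" using that by (simp add: power2_eq_square)
    finally show ?thesis by simp
  qed
  have "\<phi> 1 \<le> \<phi> 0"
  proof (rule DERIV_nonpos_imp_nonincreasing[of 0 1])
    fix x :: real assume "0 \<le> x" "x \<le> 1"
    then show "\<exists>y. DERIV \<phi> x :> y \<and> y \<le> 0" using der[of x] nonpos[of x] by blast
  qed simp
  then show ?thesis using h0 by (simp add: \<phi>_def d_def)
qed
lemma aux:
  fixes gx gv gk L a X V K Q :: real
  assumes 1: "gx - L/2*X \<le> a*(gv - L/2*V) + (1-a)*(gk - L/2*K)"
    and 2: "a*V + (1-a)*K - X = a*(1-a)*Q"
  shows "gx \<le> a*gv + (1-a)*gk - L/2*(a*(1-a)*Q)"
proof -
  have X: "X = a*V + (1-a)*K - a*(1-a)*Q" using 2 by simp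
  have "gx \<le> a*(gv - L/2*V) + (1-a)*(gk - L/2*K) + L/2*X" using 1 by simp
  also have "\<dots> = a*gv + (1-a)*gk - L/2*(a*(1-a)*Q)" unfolding X by (simp add: field_simps)
  finally show ?thesis .
qed
lemma aux2:
  fixes C :: real and m :: nat
  assumes "C \<ge> 0"
  shows "2 * C * (real m + 1) / (real m + 2)^2 \<le> 2 * C / (real (Suc m) + 2)"
proof -
  have "(2 * C * (real m + 1)) * (real m + 3) \<le> (2 * C) * (real m + 2)^2"
  proof -
    have "(real m + 1) * (real m + 3) \<le> (real m + 2)^2" by (simp add: power2_eq_square algebra_simps)
    then show ?thesis using assms mult_left_mono[of _ _ "2*C"] by (simp add: mult.assoc)
  qed
  then show ?thesis by (simp add: field_simps)
qed

lemma sq_ident: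
  fixes u v :: "'a::real_inner"
  shows "a * (norm u)\<^sup>2 + (1 - a) * (norm v)\<^sup>2 - (norm (a *\<^sub>R u + (1 - a) *\<^sub>R v))\<^sup>2
         = a * (1 - a) * (norm (u - v))\<^sup>2"
  by (simp add: power2_norm_eq_inner inner_simps algebra_simps)

lemma recur:
  fixes \<delta> :: "nat \<Rightarrow> real"
  assumes C: "C \<ge> 0"
    and r: "\<And>n a. n \<ge> 1 \<Longrightarrow> 0 \<le> a \<Longrightarrow> a \<le> 1 \<Longrightarrow> \<delta> n \<le> (1 - a) * \<delta> (n - 1) + C / 2 * a\<^sup>2"
  shows "n \<ge> 1 \<Longrightarrow> \<delta> n \<le> 2 * C / (real n + 2)"
proof (induction n)
  case 0 then show ?case by simp
next
  case (Suc m)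
  show ?case
  proof (cases "m = 0")
    case True
    have "\<delta> 1 \<le> C / 2" using r[of 1 1] by simp
    also have "\<dots> \<le> 2 * C / 3" using C by simp
    finally show ?thesis using True by simp
  next
    case False
    then have m1: "m \<ge> 1" by simp
    have ih: "\<delta> m \<le> 2 * C / (real m + 2)" using Suc.IH m1 by simp
    define a where "a = 2 / (real m + 2)"
    have a0: "0 \<le> a" "a \<le> 1" using m1 by (auto simp: a_def)
    have "\<delta> (Suc m) \<le> (1 - a) * \<delta> m + C / 2 * a\<^sup>2" using r[of "Suc m" a] a0 by simp
    also have "\<dots> \<le> (1 - a) * (2 * C / (real m + 2)) + C / 2 * a\<^sup>2"
      using ih a0 by (intro add_right_mono mult_left_mono) auto
    also have "\<dots> = 2 * C * (real m + 1) / (real m + 2)^2"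
      by (simp add: a_def field_simps power2_eq_square, simp add: add_divide_distrib[symmetric])
    also have "\<dots> \<le> 2 * C / (real (Suc m) + 2)" by (rule aux2[OF C])
    finally show ?thesis .
  qed
qed

lemma lim0: "(\<lambda>n. 2 * C / (real n + 2)) \<longlonglongrightarrow> 0"
  by real_asymp
theorem proposition4p1:
  fixes \<Theta> :: "'a::euclidean_space set"
    and f :: "'a \<Rightarrow> real" and fstar L :: real
    and \<theta> \<nu> :: "nat \<Rightarrow> 'a" and g :: "nat \<Rightarrow> 'a \<Rightarrow> real" and \<alpha> :: "nat \<Rightarrow> real"
  assumes cvx: "convex \<Theta>" and bnd: "bounded \<Theta>"
    and fcont: "continuous_on UNIV f" and fcvx: "convex_on UNIV f"
    and fmin: "\<exists>\<theta>s\<in>\<Theta>. f \<theta>s = fstar" and fmin_le: "\<forall>\<theta>'\<in>\<Theta>. fstar \<le> f \<theta>'"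
    and init: "\<theta> 0 \<in> \<Theta>"
    and maj: "\<forall>n\<ge>1. majorant f (g n)"
    and surr: "\<forall>n\<ge>1. strong_first_order_surrogate \<Theta> L L f (\<theta> (n - 1)) (g n)"
    and nu: "\<forall>n\<ge>1. is_arg_min (\<lambda>x. g n x - L / 2 * (norm (x - \<theta> (n - 1)))\<^sup>2) (\<lambda>x. x \<in> \<Theta>) (\<nu> n)"
    and alpha: "\<forall>n\<ge>1. is_arg_min (\<lambda>a. g n (a *\<^sub>R \<nu> n + (1 - a) *\<^sub>R \<theta> (n - 1)))
                                    (\<lambda>a. a \<in> {0..1}) (\<alpha> n)"
    and step: "\<forall>n\<ge>1. \<theta> n = \<alpha> n *\<^sub>R \<nu> n + (1 - \<alpha> n) *\<^sub>R \<theta> (n - 1)"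
  shows "(\<lambda>n. f (\<theta> n)) \<longlonglongrightarrow> fstar \<and>
         (\<forall>n\<ge>1. f (\<theta> n) - fstar \<le> 2 * L * (diameter \<Theta>)\<^sup>2 / (real n + 2))"
proof -
  obtain ts where ts: "ts \<in> \<Theta>" "f ts = fstar" using fmin by blast
  define D where "D = diameter \<Theta>"
  have nuin: "\<nu> n \<in> \<Theta>" if "n \<ge> 1" for n
    using nu that by (auto simp: is_arg_min_def)
  have ain: "0 \<le> \<alpha> n" "\<alpha> n \<le> 1" if "n \<ge> 1" for n
    using alpha that by (auto simp: is_arg_min_def)
  have thin: "\<theta> n \<in> \<Theta>" for n
  proof (induction n)
    case 0 then show ?case using init by simp
  next
    case (Suc m)
    have "\<theta> (Suc m) = \<alpha> (Suc m) *\<^sub>R \<nu> (Suc m) + (1 - \<alpha> (Suc m)) *\<^sub>R \<theta> m"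
      using step by force
    then show ?case
      using convexD[OF cvx nuin[of "Suc m"] Suc.IH, of "\<alpha> (Suc m)" "1 - \<alpha> (Suc m)"] ain[of "Suc m"]
      by simp
  qed
  have L0: "L \<ge> 0"
    using surr by (force simp: strong_first_order_surrogate_def first_order_surrogate_def
        dest: lipschitz_on_nonneg)
  have key: "f (\<theta> n) - fstar \<le> (1 - a) * (f (\<theta> (n - 1)) - fstar) + L * D\<^sup>2 / 2 * a\<^sup>2"
    if n1: "n \<ge> 1" and a: "0 \<le> a" "a \<le> 1" for n a
  proof -
    define \<kappa> where "\<kappa> = \<theta> (n - 1)"
    define v where "v = \<nu> n"
    have S: "first_order_surrogate \<Theta> L f \<kappa> (g n)" and SC: "strongly_convex_on L UNIV (g n)"
      using surr n1 by (auto simp: strong_first_order_surrogate_def \<kappa>_def)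
    then obtain G where Gd: "\<forall>x. ((\<lambda>y. g n y - f y) has_derivative (\<lambda>v. G x \<bullet> v)) (at x)"
      and Gl: "L-lipschitz_on UNIV G" and h0: "g n \<kappa> - f \<kappa> = 0" and G0: "G \<kappa> = 0"
      unfolding first_order_surrogate_def by blast
    have desc: "g n x - f x \<le> L / 2 * (norm (x - \<kappa>))\<^sup>2" for x
      using descent[OF Gd Gl h0 G0] .
    have gv: "g n v - L / 2 * (norm (v - \<kappa>))\<^sup>2 \<le> fstar"
    proof -
      have "g n v - L / 2 * (norm (v - \<kappa>))\<^sup>2 \<le> g n ts - L / 2 * (norm (ts - \<kappa>))\<^sup>2"
        using nu n1 ts(1) by (auto simp: is_arg_min_linorder v_def \<kappa>_def)
      also have "\<dots> \<le> f ts" using desc[of ts] by simp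
      finally show ?thesis using ts by simp
    qed
    have cv: "g n (a *\<^sub>R v + (1 - a) *\<^sub>R \<kappa>) - L / 2 * (norm (a *\<^sub>R v + (1 - a) *\<^sub>R \<kappa>))\<^sup>2
        \<le> a * (g n v - L / 2 * (norm v)\<^sup>2) + (1 - a) * (g n \<kappa> - L / 2 * (norm \<kappa>)\<^sup>2)"
      using convex_onD[OF SC[unfolded strongly_convex_on_def], of "1 - a" v \<kappa>] a by simp
    have id: "a * (norm v)\<^sup>2 + (1 - a) * (norm \<kappa>)\<^sup>2 - (norm (a *\<^sub>R v + (1 - a) *\<^sub>R \<kappa>))\<^sup>2
         = a * (1 - a) * (norm (v - \<kappa>))\<^sup>2" by (rule sq_ident)
    have dvk: "(norm (v - \<kappa>))\<^sup>2 \<le> D\<^sup>2"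
    proof -
      have "norm (v - \<kappa>) \<le> D"
        using diameter_bounded_bound[OF bnd nuin[OF n1] thin[of "n - 1"]]
        by (simp add: D_def dist_norm v_def \<kappa>_def)
      then show ?thesis by (simp add: power_mono)
    qed
    have "f (\<theta> n) \<le> g n (\<theta> n)" using maj n1 by (simp add: majorant_def)
    also have "\<dots> \<le> g n (a *\<^sub>R v + (1 - a) *\<^sub>R \<kappa>)"
      using alpha n1 a step by (auto simp: is_arg_min_linorder v_def \<kappa>_def)
    also have "\<dots> \<le> a * g n v + (1 - a) * g n \<kappa> - L / 2 * (a * (1 - a) * (norm (v - \<kappa>))\<^sup>2)"
      by (rule aux[OF cv id])
    also have "\<dots> \<le> a * (fstar + L / 2 * (norm (v - \<kappa>))\<^sup>2) + (1 - a) * f \<kappa>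
                     - L / 2 * (a * (1 - a) * (norm (v - \<kappa>))\<^sup>2)"
      using gv h0 a by (intro diff_right_mono add_mono mult_left_mono) auto
    also have "\<dots> = a * fstar + (1 - a) * f \<kappa> + L / 2 * a\<^sup>2 * (norm (v - \<kappa>))\<^sup>2"
      by (simp add: algebra_simps power2_eq_square)
    also have "\<dots> \<le> a * fstar + (1 - a) * f \<kappa> + L / 2 * a\<^sup>2 * D\<^sup>2"
      using dvk L0 by (intro add_left_mono mult_left_mono) auto
    finally show ?thesis by (simp add: \<kappa>_def algebra_simps)
  qed
  have bound: "f (\<theta> n) - fstar \<le> 2 * (L * D\<^sup>2) / (real n + 2)" if "n \<ge> 1" for n
    using recur[of "L * D\<^sup>2" "\<lambda>n. f (\<theta> n) - fstar", OF _ key that] L0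
    by (simp add: mult.commute mult.left_commute)
  have lim: "(\<lambda>n. f (\<theta> n) - fstar) \<longlonglongrightarrow> 0"
  proof (rule tendsto_sandwich[OF _ _ tendsto_const lim0[of "L * D\<^sup>2"]])
    show "\<forall>\<^sub>F n in sequentially. 0 \<le> f (\<theta> n) - fstar" using fmin_le thin by simp
    show "\<forall>\<^sub>F n in sequentially. f (\<theta> n) - fstar \<le> 2 * (L * D\<^sup>2) / (real n + 2)"
      using bound eventually_sequentially by blast
  qed
  then have "(\<lambda>n. f (\<theta> n)) \<longlonglongrightarrow> fstar"
    using tendsto_add_const_iff[of "- fstar" "\<lambda>n. f (\<theta> n)" fstar] by simp
  moreover have "\<forall>n\<ge>1. f (\<theta> n) - fstar \<le> 2 * L * (diameter \<Theta>)\<^sup>2 / (real n + 2)"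
    using bound by (simp add: D_def mult.assoc)
  ultimately show ?thesis by blast
qed
end
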